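(* Let $1<q<p<\infty$ and let $f:(0,\infty)\to\mathbb R$, $f(x)=q(q-1)x^{-q-1}\mathbbm 1_{[(q-1)^{1/q},\infty)}(x)$. Then $f$ is a probability density, and if $\xi_1,\dots,\xi_n$ are independent copies of a random variable $\xi$ with density $f$, then for all $n\in\mathbb N$ and all $a\in\mathbb R^n$, \[ \mathbb E\Big(\sum_{j=1}^n|a_j\xi_j|^p\Big)^{1/p}\simeq_{p,q}\|a\|_q, \] where $\simeq_{p,q}$ means two-sided inequality with positive constants depending only on $p$ and $q$.
   Context: $\|a\|_q=(\sum_j|a_j|^q)^{1/q}$. *)

theory Defs
  imports "HOL-Probability.Probability"
begin

text \<open>The density f(x) = q(q-1) x^(-q-1) 1_{[(q-1)^(1/q), oo)}(x), extended by 0 to the whole real line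
  (it already vanishes on (0,(q-1)^(1/q)) and the threshold is positive for q > 1).\<close>
definition dens :: "real \<Rightarrow> real \<Rightarrow> real" where
  "dens q x = (if (q - 1) powr (1 / q) \<le> x then q * (q - 1) * x powr (- q - 1) else 0)"

definition lq_norm :: "real \<Rightarrow> nat \<Rightarrow> (nat \<Rightarrow> real) \<Rightarrow> real" where
  "lq_norm q n a = (\<Sum>j<n. \<bar>a j\<bar> powr q) powr (1 / q)"

end

theory Submission
  imports Defs
begin


lemma t_pos: "1 < (q::real) \<Longrightarrow> 0 < (q - 1) powr (1 / q)" by (auto simp: powr_def)

lemma t_powq: "1 < (q::real) \<Longrightarrow> ((q - 1) powr (1 / q)) powr q = q - 1"
  by (simp add: powr_powr)

lemma dens_nonneg: "1 < q \<Longrightarrow> 0 \<le> dens q x"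
  unfolding dens_def by auto

lemma dens_meas[measurable]: "dens q \<in> borel_measurable borel"
  unfolding dens_def by measurable

lemma tail_int:
  assumes q: "1 < q" and s: "(q - 1) powr (1 / q) \<le> s"
  shows "(\<integral>\<^sup>+ x. ennreal (dens q x) * indicator {s..} x \<partial>lborel) = ennreal ((q - 1) * s powr (- q))"
proof -
  have s0: "0 < s" using t_pos[OF q] s by linarith
  have "(\<integral>\<^sup>+ x. ennreal (dens q x) * indicator {s..} x \<partial>lborel)
      = (\<integral>\<^sup>+ x. ennreal (q * (q - 1) * x powr (- q - 1)) * indicator {s..} x \<partial>lborel)"
    using s by (intro nn_integral_cong) (auto simp: dens_def split: split_indicator)
  also have "\<dots> = ennreal (0 - (- (q - 1) * s powr (- q)))"
  proof (rule nn_integral_FTC_atLeast)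
    show "(\<lambda>x. q * (q - 1) * x powr (- q - 1)) \<in> borel_measurable borel" by measurable
    fix x assume x: "s \<le> x"
    then have "0 < x" using s0 by linarith
    show "((\<lambda>x. - (q - 1) * x powr (- q)) has_real_derivative q * (q - 1) * x powr (- q - 1)) (at x)"
      using has_real_derivative_powr[OF \<open>0 < x\<close>, of "-q"] \<open>0 < x\<close>
      by (auto intro!: derivative_eq_intros simp: algebra_simps)
    show "0 \<le> q * (q - 1) * x powr (- q - 1)" using q by simp
  next
    show "((\<lambda>x. - (q - 1) * x powr (- q)) \<longlongrightarrow> 0) at_top"
      using tendsto_mult[OF tendsto_const tendsto_neg_powr[of "-q" "\<lambda>x. x" at_top], of "-(q-1)"] q
      by (simp add: filterlim_ident)
  qed
  finally show ?thesis by (simp add: algebra_simps)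
qed

lemma dens_zero: "x < (q - 1) powr (1 / q) \<Longrightarrow> dens q x = 0"
  unfolding dens_def by auto

lemma dens_total:
  assumes q: "1 < (q::real)"
  shows "(\<integral>\<^sup>+ x. ennreal (dens q x) \<partial>lborel) = 1"
proof -
  let ?t = "(q - 1) powr (1 / q)"
  have "(\<integral>\<^sup>+ x. ennreal (dens q x) \<partial>lborel) = (\<integral>\<^sup>+ x. ennreal (dens q x) * indicator {?t..} x \<partial>lborel)"
    by (intro nn_integral_cong) (auto simp: dens_zero split: split_indicator)
  also have "\<dots> = ennreal ((q - 1) * ?t powr (- q))"
    using tail_int[OF q] by simp
  also have "(q - 1) * ?t powr (- q) = 1"
    using q by (simp add: powr_minus t_powq)
  finally show ?thesis by simp
qed

lemma prob_M: "1 < (q::real) \<Longrightarrow> prob_space (density lborel (dens q))"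
  by (intro prob_spaceI) (simp add: emeasure_density dens_total)

lemma I1:
  assumes q: "1 < q" and pq: "q < p" and m: "0 < m"
  shows "(\<integral>\<^sup>+ x. ennreal (q * (q - 1) * x powr (p - q - 1)) * indicator {(q - 1) powr (1 / q)..m} x \<partial>lborel)
         \<le> ennreal (q * (q - 1) / (p - q) * m powr (p - q))"
proof (cases "(q - 1) powr (1 / q) \<le> m")
  case True
  let ?t = "(q - 1) powr (1 / q)"
  have t0: "0 < ?t" using t_pos[OF q] .
  have "(\<integral>\<^sup>+ x. ennreal (q * (q - 1) * x powr (p - q - 1)) * indicator {?t..m} x \<partial>lborel)
     = ennreal (q * (q - 1) / (p - q) * m powr (p - q) - q * (q - 1) / (p - q) * ?t powr (p - q))"
  proof (rule nn_integral_FTC_Icc)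
    show "(\<lambda>x. q * (q - 1) * x powr (p - q - 1)) \<in> borel_measurable borel" by measurable
    fix x assume x: "x \<in> {?t..m}"
    then have "?t \<le> x" by simp
    then have "0 < x" using t0 by linarith
    show "((\<lambda>x. q * (q - 1) / (p - q) * x powr (p - q)) has_real_derivative q * (q - 1) * x powr (p - q - 1)) (at x)"
    proof -
      have d: "((\<lambda>x. q * (q - 1) / (p - q) * x powr (p - q)) has_real_derivative
               q * (q - 1) / (p - q) * ((p - q) * x powr (p - q - 1))) (at x)"
        by (intro DERIV_cmult has_real_derivative_powr) fact
      moreover have "q * (q - 1) / (p - q) * ((p - q) * x powr (p - q - 1)) = q * (q - 1) * x powr (p - q - 1)"
        using pq by simp
      ultimately show ?thesis by simp
    qed
    show "0 \<le> q * (q - 1) * x powr (p - q - 1)" using q by simp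
  qed (use True in auto)
  also have "\<dots> \<le> ennreal (q * (q - 1) / (p - q) * m powr (p - q))"
    using q pq by (intro ennreal_leI) simp
  finally show ?thesis .
next
  case False
  then have "{(q - 1) powr (1 / q)..m} = {}" by auto
  then show ?thesis by simp
qed

lemma I2:
  assumes q: "1 < q" and b: "0 < b"
  shows "(\<integral>\<^sup>+ x. ennreal (q * (q - 1) * x powr (- q)) * indicator {b..} x \<partial>lborel)
         = ennreal (q * b powr (1 - q))"
proof -
  have "(\<integral>\<^sup>+ x. ennreal (q * (q - 1) * x powr (- q)) * indicator {b..} x \<partial>lborel)
      = ennreal (0 - (- q * b powr (1 - q)))"
  proof (rule nn_integral_FTC_atLeast)
    show "(\<lambda>x. q * (q - 1) * x powr (- q)) \<in> borel_measurable borel" by measurable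
    fix x assume x: "b \<le> x"
    then have "0 < x" using b by linarith
    show "((\<lambda>x. - q * x powr (1 - q)) has_real_derivative q * (q - 1) * x powr (- q)) (at x)"
      using has_real_derivative_powr[OF \<open>0 < x\<close>, of "1 - q"] \<open>0 < x\<close>
      by (auto intro!: derivative_eq_intros simp: algebra_simps)
    show "0 \<le> q * (q - 1) * x powr (- q)" using q by simp
  next
    show "((\<lambda>x. - q * x powr (1 - q)) \<longlongrightarrow> 0) at_top"
      using tendsto_mult[OF tendsto_const tendsto_neg_powr[of "1 - q" "\<lambda>x. x" at_top], of "- q"] q
      by (simp add: filterlim_ident)
  qed
  then show ?thesis by simp
qed

lemma pointwise_coord:
  assumes q: "1 < q" and pq: "q < p" and l: "0 < l" and a: "a \<noteq> 0"
  shows "dens q x * (l powr (1 - p) * (if \<bar>a * x\<bar> \<le> l then \<bar>a * x\<bar> powr p else 0) + (if l < \<bar>a * x\<bar> then \<bar>a * x\<bar> else 0))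
    \<le> (l powr (1 - p) * \<bar>a\<bar> powr p) * ((q * (q - 1) * x powr (p - q - 1)) * indicator {(q - 1) powr (1 / q)..l / \<bar>a\<bar>} x)
      + \<bar>a\<bar> * ((q * (q - 1) * x powr (- q)) * indicator {max ((q - 1) powr (1 / q)) (l / \<bar>a\<bar>)..} x)"
    (is "?L \<le> ?A * ?R1 + ?B * ?R2")
proof -
  let ?t = "(q - 1) powr (1 / q)"
  have t0: "0 < ?t" using t_pos[OF q] .
  have R1: "0 \<le> ?R1" using q by (simp split: split_indicator)
  have R2: "0 \<le> ?R2" using q by (simp split: split_indicator)
  have A: "0 \<le> ?A" by simp
  have B: "0 \<le> ?B" by simp
  show ?thesis
  proof (cases "x < ?t")
    case True
    then have "?L = 0" by (simp add: dens_zero)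
    moreover have "0 \<le> ?A * ?R1 + ?B * ?R2" using R1 R2 A B by simp
    ultimately show ?thesis by linarith
  next
    case False
    then have tx: "?t \<le> x" by simp
    then have x0: "0 < x" using t0 by linarith
    have ax: "\<bar>a * x\<bar> = \<bar>a\<bar> * x" using x0 by (simp add: abs_mult)
    have d: "dens q x = q * (q - 1) * x powr (- q - 1)" using tx by (simp add: dens_def)
    have a0: "0 < \<bar>a\<bar>" using a by simp
    show ?thesis
    proof (cases "\<bar>a * x\<bar> \<le> l")
      case True
      then have xm: "x \<le> l / \<bar>a\<bar>" using ax a0 by (simp add: field_simps)
      have "?L = q * (q - 1) * x powr (- q - 1) * (l powr (1 - p) * (\<bar>a\<bar> powr p * x powr p))"
        using True l ax x0 by (simp add: d powr_mult)
      also have "\<dots> = ?A * (q * (q - 1) * (x powr (- q - 1) * x powr p))" by (simp add: algebra_simps)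
      also have "x powr (- q - 1) * x powr p = x powr (p - q - 1)" by (simp add: powr_add[symmetric] algebra_simps)
      also have "?A * (q * (q - 1) * x powr (p - q - 1)) = ?A * ?R1" using tx xm by simp
      finally show ?thesis using B R2 by simp
    next
      case False
      then have xm: "l / \<bar>a\<bar> < x" using ax a0 by (simp add: field_simps)
      have "?L = q * (q - 1) * x powr (- q - 1) * (\<bar>a\<bar> * x)"
        using False l ax x0 by (simp add: d)
      also have "\<dots> = ?B * (q * (q - 1) * (x powr (- q - 1) * x powr 1))" using x0 by (simp add: algebra_simps)
      also have "x powr (- q - 1) * x powr 1 = x powr (- q)" 
        by (subst powr_add[symmetric]) simp
      also have "?B * (q * (q - 1) * x powr (- q)) = ?B * ?R2" using tx xm by simp
      finally show ?thesis using A R1 by simp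
    qed
  qed
qed

lemma coord_int:
  assumes q: "1 < q" and pq: "q < p" and l: "0 < l"
  shows "(\<integral>\<^sup>+ x. ennreal (l powr (1 - p) * (if \<bar>a * x\<bar> \<le> l then \<bar>a * x\<bar> powr p else 0) + (if l < \<bar>a * x\<bar> then \<bar>a * x\<bar> else 0)) \<partial>density lborel (dens q))
    \<le> ennreal ((q * (q - 1) / (p - q) + q) * \<bar>a\<bar> powr q * l powr (1 - q))"
proof (cases "a = 0")
  case True
  then show ?thesis using l by simp
next
  case False
  let ?g = "\<lambda>x. l powr (1 - p) * (if \<bar>a * x\<bar> \<le> l then \<bar>a * x\<bar> powr p else 0) + (if l < \<bar>a * x\<bar> then \<bar>a * x\<bar> else 0)"
  let ?t = "(q - 1) powr (1 / q)"
  let ?m = "l / \<bar>a\<bar>"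
  let ?b = "max ?t ?m"
  let ?A = "l powr (1 - p) * \<bar>a\<bar> powr p"
  let ?B = "\<bar>a\<bar>"
  have a0: "0 < \<bar>a\<bar>" using False by simp
  have m0: "0 < ?m" using a0 l by simp
  have b0: "0 < ?b" using m0 by simp
  have gnn: "0 \<le> ?g x" for x using l by simp
  have "(\<integral>\<^sup>+ x. ennreal (?g x) \<partial>density lborel (dens q)) = (\<integral>\<^sup>+ x. ennreal (dens q x) * ennreal (?g x) \<partial>lborel)"
    by (subst nn_integral_density) auto
  also have "\<dots> = (\<integral>\<^sup>+ x. ennreal (dens q x * ?g x) \<partial>lborel)"
    using gnn dens_nonneg[OF q] by (intro nn_integral_cong) (simp add: ennreal_mult)
  also have "\<dots> \<le> (\<integral>\<^sup>+ x. ennreal ?A * (ennreal (q * (q - 1) * x powr (p - q - 1)) * indicator {?t..?m} x)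
                    + ennreal ?B * (ennreal (q * (q - 1) * x powr (- q)) * indicator {?b..} x) \<partial>lborel)"
  proof (intro nn_integral_mono)
    fix x
    have "ennreal (dens q x * ?g x) \<le> ennreal (?A * ((q * (q - 1) * x powr (p - q - 1)) * indicator {?t..?m} x)
      + ?B * ((q * (q - 1) * x powr (- q)) * indicator {?b..} x))"
      by (intro ennreal_leI pointwise_coord q pq l False)
    also have "\<dots> = ennreal ?A * (ennreal (q * (q - 1) * x powr (p - q - 1)) * indicator {?t..?m} x)
                    + ennreal ?B * (ennreal (q * (q - 1) * x powr (- q)) * indicator {?b..} x)"
      using q by (simp add: ennreal_plus ennreal_mult split: split_indicator)
    finally show "ennreal (dens q x * ?g x) \<le> \<dots>" .
  qed
  also have "\<dots> = ennreal ?A * (\<integral>\<^sup>+ x. ennreal (q * (q - 1) * x powr (p - q - 1)) * indicator {?t..?m} x \<partial>lborel)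
      + ennreal ?B * (\<integral>\<^sup>+ x. ennreal (q * (q - 1) * x powr (- q)) * indicator {?b..} x \<partial>lborel)"
    by (subst nn_integral_add) (auto simp: nn_integral_cmult)
  also have "\<dots> \<le> ennreal ?A * ennreal (q * (q - 1) / (p - q) * ?m powr (p - q)) + ennreal ?B * ennreal (q * ?b powr (1 - q))"
    using I1[OF q pq m0] I2[OF q b0] by (intro add_mono mult_left_mono) auto
  also have "\<dots> = ennreal (?A * (q * (q - 1) / (p - q) * ?m powr (p - q)) + ?B * (q * ?b powr (1 - q)))"
  proof -
    have h1: "0 \<le> ?A" and h2: "0 \<le> q * (q - 1) / (p - q) * ?m powr (p - q)"
      and h3: "0 \<le> ?B" and h4: "0 \<le> q * ?b powr (1 - q)" using q pq by auto
    show ?thesis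
      by (simp only: ennreal_mult[OF h1 h2, symmetric] ennreal_mult[OF h3 h4, symmetric]
          ennreal_plus[OF mult_nonneg_nonneg[OF h1 h2] mult_nonneg_nonneg[OF h3 h4], symmetric])
  qed
  also have "\<dots> \<le> ennreal ((q * (q - 1) / (p - q) + q) * \<bar>a\<bar> powr q * l powr (1 - q))"
  proof (intro ennreal_leI)
    have e1: "?A * ?m powr (p - q) = \<bar>a\<bar> powr q * l powr (1 - q)"
    proof -
      have "?A * ?m powr (p - q) = (l powr (1 - p) * l powr (p - q)) * (\<bar>a\<bar> powr p / \<bar>a\<bar> powr (p - q))"
        by (simp add: powr_divide)
      also have "l powr (1 - p) * l powr (p - q) = l powr (1 - q)" by (simp add: powr_add[symmetric])
      also have "\<bar>a\<bar> powr p / \<bar>a\<bar> powr (p - q) = \<bar>a\<bar> powr q" by (simp add: powr_diff[symmetric])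
      finally show ?thesis by simp
    qed
    have e2: "?B * ?m powr (1 - q) = \<bar>a\<bar> powr q * l powr (1 - q)"
    proof -
      have "?B * ?m powr (1 - q) = l powr (1 - q) * (\<bar>a\<bar> powr 1 / \<bar>a\<bar> powr (1 - q))"
        using a0 by (simp add: powr_divide)
      also have "\<bar>a\<bar> powr 1 / \<bar>a\<bar> powr (1 - q) = \<bar>a\<bar> powr q"
        by (subst powr_diff[symmetric]) simp
      finally show ?thesis by simp
    qed
    have bm: "?b powr (1 - q) \<le> ?m powr (1 - q)"
      using q m0 by (intro powr_mono2') auto
    have "?A * (q * (q - 1) / (p - q) * ?m powr (p - q)) + ?B * (q * ?b powr (1 - q))
        \<le> ?A * (q * (q - 1) / (p - q) * ?m powr (p - q)) + ?B * (q * ?m powr (1 - q))"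
      using bm q a0 by (intro add_left_mono mult_left_mono) auto
    also have "\<dots> = q * (q - 1) / (p - q) * (?A * ?m powr (p - q)) + q * (?B * ?m powr (1 - q))"
      by (simp add: algebra_simps)
    also have "\<dots> = (q * (q - 1) / (p - q) + q) * \<bar>a\<bar> powr q * l powr (1 - q)"
      unfolding e1 e2 by (simp add: algebra_simps)
    finally show "?A * (q * (q - 1) / (p - q) * ?m powr (p - q)) + ?B * (q * ?b powr (1 - q))
        \<le> (q * (q - 1) / (p - q) + q) * \<bar>a\<bar> powr q * l powr (1 - q)" .
  qed
  finally show ?thesis .
qed

lemma measure_tail:
  assumes q: "1 < q" and s: "(q - 1) powr (1 / q) \<le> s"
  shows "measure (density lborel (dens q)) {s..} = (q - 1) * s powr (- q)"
proof -
  have "emeasure (density lborel (dens q)) {s..} = ennreal ((q - 1) * s powr (- q))"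
    using tail_int[OF q s] by (simp add: emeasure_density)
  then show ?thesis using q by (simp add: measure_def)
qed

lemma coord_small:
  assumes q: "1 < q" and l: "0 < l" and al: "\<bar>a\<bar> \<le> l"
  shows "measure (density lborel (dens q)) {x. \<bar>a * x\<bar> < l} \<le> 1 - min 1 (q - 1) * (\<bar>a\<bar> / l) powr q"
proof -
  interpret M: prob_space "density lborel (dens q)" using prob_M[OF q] .
  show ?thesis
  proof (cases "a = 0")
    case True
    then have "{x. \<bar>a * x\<bar> < l} = space (density lborel (dens q))" using l by auto
    then show ?thesis using True l by (simp add: M.prob_space)
  next
    case False
    let ?t = "(q - 1) powr (1 / q)"
    let ?s = "l / \<bar>a\<bar>"
    let ?b = "max ?s ?t"
    have a0: "0 < \<bar>a\<bar>" using False by simp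
    have s1: "1 \<le> ?s" using a0 al by simp
    have sub: "{x. \<bar>a * x\<bar> < l} \<subseteq> space (density lborel (dens q)) - {?b..}"
    proof
      fix x assume "x \<in> {x. \<bar>a * x\<bar> < l}"
      then have "\<bar>a\<bar> * \<bar>x\<bar> < l" by (simp add: abs_mult)
      then have "\<bar>x\<bar> < ?s" using a0 by (simp add: field_simps)
      then show "x \<in> space (density lborel (dens q)) - {?b..}" by auto
    qed
    have "measure (density lborel (dens q)) {x. \<bar>a * x\<bar> < l} \<le> measure (density lborel (dens q)) (space (density lborel (dens q)) - {?b..})"
      using sub by (intro M.finite_measure_mono) auto
    also have "\<dots> = 1 - measure (density lborel (dens q)) {?b..}"
      by (intro M.prob_compl) auto
    also have "measure (density lborel (dens q)) {?b..} = (q - 1) * ?b powr (- q)"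
      by (intro measure_tail q) auto
    finally have m1: "measure (density lborel (dens q)) {x. \<bar>a * x\<bar> < l} \<le> 1 - (q - 1) * ?b powr (- q)" .
    have "min 1 (q - 1) * (\<bar>a\<bar> / l) powr q \<le> (q - 1) * ?b powr (- q)"
    proof (cases "?t \<le> ?s")
      case True
      then have "?b = ?s" by simp
      moreover have "(\<bar>a\<bar> / l) powr q = ?s powr (- q)"
        using a0 l by (simp add: powr_minus powr_divide)
      moreover have "min 1 (q - 1) \<le> q - 1" by simp
      ultimately show ?thesis by (simp add: mult_right_mono)
    next
      case False
      then have "?b = ?t" by simp
      moreover have "(q - 1) * ?t powr (- q) = 1"
        using q by (simp add: powr_minus t_powq)
      moreover have "(\<bar>a\<bar> / l) powr q \<le> 1" using a0 al l q by (intro powr_le1) auto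
      moreover have "min 1 (q - 1) \<le> 1" by simp
      moreover have "0 \<le> min 1 (q - 1)" using q by simp
      ultimately show ?thesis by (simp add: mult_le_one)
    qed
    with m1 show ?thesis by linarith
  qed
qed



lemma pow_le_lin:
  fixes y D p :: real
  assumes "0 \<le> y" "y \<le> D" "1 \<le> p"
  shows "y powr p \<le> D powr (p - 1) * y"
proof (cases "y = 0")
  case True then show ?thesis by simp
next
  case False
  then have y0: "0 < y" using assms by simp
  have "y powr p = y powr (p - 1) * y powr 1" by (subst powr_add[symmetric]) simp
  also have "\<dots> = y powr (p - 1) * y" using y0 by simp
  also have "\<dots> \<le> D powr (p - 1) * y"
    using assms y0 by (intro mult_right_mono powr_mono2) auto
  finally show ?thesis .
qed

lemma sum_powr_le:
  fixes c p :: real and v :: "'i \<Rightarrow> real"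
  assumes fin: "finite J" and c: "0 \<le> c" and v: "\<And>j. j \<in> J \<Longrightarrow> 0 \<le> v j" and p: "1 \<le> p"
  shows "c powr p + (\<Sum>j\<in>J. v j powr p) \<le> (c + (\<Sum>j\<in>J. v j)) powr p"
proof -
  let ?D = "c + (\<Sum>j\<in>J. v j)"
  have sv: "0 \<le> (\<Sum>j\<in>J. v j)" using v by (simp add: sum_nonneg)
  have vD: "v j \<le> ?D" if "j \<in> J" for j
  proof -
    have "v j \<le> (\<Sum>j\<in>J. v j)" using member_le_sum[OF that] v fin by auto
    then show ?thesis using c by linarith
  qed
  have "c powr p + (\<Sum>j\<in>J. v j powr p) \<le> ?D powr (p - 1) * c + (\<Sum>j\<in>J. ?D powr (p - 1) * v j)"
    using c sv p v vD by (intro add_mono pow_le_lin sum_mono) auto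
  also have "\<dots> = ?D powr (p - 1) * ?D" by (simp add: sum_distrib_left sum_distrib_right algebra_simps)
  also have "\<dots> = ?D powr p"
  proof (cases "?D = 0")
    case True then show ?thesis by simp
  next
    case False
    then have "0 < ?D" using c sv by linarith
    have "?D powr (p - 1) * ?D powr 1 = ?D powr p" by (subst powr_add[symmetric]) simp
    then show ?thesis using \<open>0 < ?D\<close> by simp
  qed
  finally show ?thesis .
qed

lemma root_le_lin:
  fixes U l p :: real
  assumes U: "0 \<le> U" and l: "0 < l" and p: "1 \<le> p"
  shows "U powr (1 / p) \<le> l + l powr (1 - p) * U"
proof (cases "U \<le> l powr p")
  case True
  have "U powr (1 / p) \<le> (l powr p) powr (1 / p)" using True U p by (intro powr_mono2) auto
  also have "\<dots> = l" using l p by (simp add: powr_powr)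
  finally show ?thesis using l U by (smt (verit) mult_nonneg_nonneg powr_ge_zero)
next
  case False
  then have U0: "0 < U" using l by (smt (verit) powr_gt_zero)
  have "U powr (1 / p) = U powr (1 / p - 1) * U powr 1" by (subst powr_add[symmetric]) simp
  also have "\<dots> = U powr (1 / p - 1) * U" using U0 by simp
  also have "U powr (1 / p - 1) \<le> (l powr p) powr (1 / p - 1)"
    using False p l by (intro powr_mono2') (auto simp: field_simps)
  also have "(l powr p) powr (1 / p - 1) = l powr (1 - p)"
    using p by (simp add: powr_powr algebra_simps)
  finally have "U powr (1 / p) \<le> l powr (1 - p) * U" using U0 by (simp add: mult_right_mono)
  then show ?thesis using l by linarith
qed

lemma pointwise_Y:
  fixes z :: "'i \<Rightarrow> real" and l p :: real
  assumes fin: "finite J" and l: "0 < l" and p: "1 \<le> p"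
  shows "(\<Sum>j\<in>J. \<bar>z j\<bar> powr p) powr (1 / p)
    \<le> l + (\<Sum>j\<in>J. l powr (1 - p) * (if \<bar>z j\<bar> \<le> l then \<bar>z j\<bar> powr p else 0) + (if l < \<bar>z j\<bar> then \<bar>z j\<bar> else 0))"
proof -
  define U where "U = (\<Sum>j\<in>J. if \<bar>z j\<bar> \<le> l then \<bar>z j\<bar> powr p else 0)"
  define v where "v j = (if l < \<bar>z j\<bar> then \<bar>z j\<bar> else 0)" for j
  have U0: "0 \<le> U" unfolding U_def by (intro sum_nonneg) auto
  have v0: "0 \<le> v j" for j unfolding v_def by auto
  have "(\<Sum>j\<in>J. \<bar>z j\<bar> powr p) = (\<Sum>j\<in>J. (if \<bar>z j\<bar> \<le> l then \<bar>z j\<bar> powr p else 0) + v j powr p)"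
    by (intro sum.cong) (auto simp: v_def)
  also have "\<dots> = U + (\<Sum>j\<in>J. v j powr p)" by (simp add: U_def sum.distrib)
  also have "U = (U powr (1 / p)) powr p" using U0 p by (simp add: powr_powr)
  also have "(U powr (1 / p)) powr p + (\<Sum>j\<in>J. v j powr p) \<le> (U powr (1 / p) + (\<Sum>j\<in>J. v j)) powr p"
    by (intro sum_powr_le fin v0 p) simp
  finally have S: "(\<Sum>j\<in>J. \<bar>z j\<bar> powr p) \<le> (U powr (1 / p) + (\<Sum>j\<in>J. v j)) powr p" .
  have "(\<Sum>j\<in>J. \<bar>z j\<bar> powr p) powr (1 / p) \<le> ((U powr (1 / p) + (\<Sum>j\<in>J. v j)) powr p) powr (1 / p)"
    using S p by (intro powr_mono2) (auto intro: sum_nonneg)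
  also have "\<dots> = U powr (1 / p) + (\<Sum>j\<in>J. v j)"
    using p v0 by (simp add: powr_powr sum_nonneg)
  also have "\<dots> \<le> l + l powr (1 - p) * U + (\<Sum>j\<in>J. v j)"
    using root_le_lin[OF U0 l p] by simp
  also have "\<dots> = l + (\<Sum>j\<in>J. l powr (1 - p) * (if \<bar>z j\<bar> \<le> l then \<bar>z j\<bar> powr p else 0) + v j)"
    by (simp add: U_def sum_distrib_left sum.distrib)
  finally show ?thesis by (simp add: v_def)
qed



lemma space_M: "space (density lborel (dens q)) = UNIV" by simp

lemma marginal:
  assumes q: "1 < q" and j: "j < n" and g: "g \<in> borel_measurable borel"
  shows "(\<integral>\<^sup>+ \<omega>. g (\<omega> j) \<partial>PiM {..<n} (\<lambda>_. density lborel (dens q))) = (\<integral>\<^sup>+ x. g x \<partial>density lborel (dens q))"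
proof -
  have "(\<integral>\<^sup>+ x. g x \<partial>density lborel (dens q)) = (\<integral>\<^sup>+ x. g x \<partial>distr (PiM {..<n} (\<lambda>_. density lborel (dens q))) (density lborel (dens q)) (\<lambda>\<omega>. \<omega> j))"
    by (subst distr_PiM_component) (use prob_M[OF q] j in auto)
  also have "\<dots> = (\<integral>\<^sup>+ \<omega>. g (\<omega> j) \<partial>PiM {..<n} (\<lambda>_. density lborel (dens q)))"
    using j g by (subst nn_integral_distr) auto
  finally show ?thesis by simp
qed

lemma Y_meas:
  "(\<lambda>\<omega>. (\<Sum>j<n. \<bar>a j * \<omega> j\<bar> powr p) powr (1 / p)) \<in> borel_measurable (PiM {..<n} (\<lambda>_. density lborel (dens q)))"
  by measurable

lemma upper_nn:
  fixes a :: "nat \<Rightarrow> real"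
  assumes q: "1 < q" and pq: "q < p" and l: "0 < l" and ldef: "l powr q = (\<Sum>j<n. \<bar>a j\<bar> powr q)"
  shows "(\<integral>\<^sup>+ \<omega>. ennreal ((\<Sum>j<n. \<bar>a j * \<omega> j\<bar> powr p) powr (1 / p)) \<partial>PiM {..<n} (\<lambda>_. density lborel (dens q)))
    \<le> ennreal ((1 + (q * (q - 1) / (p - q) + q)) * l)"
proof -
  let ?M = "density lborel (dens q)"
  let ?P = "PiM {..<n} (\<lambda>_. ?M)"
  let ?K = "q * (q - 1) / (p - q) + q"
  define G where "G j x = l powr (1 - p) * (if \<bar>a j * x\<bar> \<le> l then \<bar>a j * x\<bar> powr p else 0) + (if l < \<bar>a j * x\<bar> then \<bar>a j * x\<bar> else 0)" for j x
  interpret P: prob_space ?P using prob_space_PiM[of "{..<n}" "\<lambda>_. ?M"] prob_M[OF q] by auto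
  have G0: "0 \<le> G j x" for j x using l by (simp add: G_def)
  have Gm[measurable]: "G j \<in> borel_measurable borel" for j unfolding G_def by measurable
  have p1: "1 \<le> p" using q pq by simp
  have "(\<integral>\<^sup>+ \<omega>. ennreal ((\<Sum>j<n. \<bar>a j * \<omega> j\<bar> powr p) powr (1 / p)) \<partial>?P)
      \<le> (\<integral>\<^sup>+ \<omega>. ennreal l + (\<Sum>j<n. ennreal (G j (\<omega> j))) \<partial>?P)"
  proof (intro nn_integral_mono)
    fix \<omega> :: "nat \<Rightarrow> real"
    have "(\<Sum>j<n. \<bar>a j * \<omega> j\<bar> powr p) powr (1 / p) \<le> l + (\<Sum>j<n. G j (\<omega> j))"
      unfolding G_def by (rule pointwise_Y[OF _ l p1]) simp
    then have "ennreal ((\<Sum>j<n. \<bar>a j * \<omega> j\<bar> powr p) powr (1 / p)) \<le> ennreal (l + (\<Sum>j<n. G j (\<omega> j)))"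
      by (rule ennreal_leI)
    also have "\<dots> = ennreal l + (\<Sum>j<n. ennreal (G j (\<omega> j)))"
      using l G0 by (simp add: ennreal_plus sum_nonneg sum_ennreal)
    finally show "ennreal ((\<Sum>j<n. \<bar>a j * \<omega> j\<bar> powr p) powr (1 / p)) \<le> ennreal l + (\<Sum>j<n. ennreal (G j (\<omega> j)))" .
  qed
  also have "\<dots> = ennreal l + (\<Sum>j<n. (\<integral>\<^sup>+ \<omega>. ennreal (G j (\<omega> j)) \<partial>?P))"
    by (subst nn_integral_add) (auto simp: nn_integral_sum P.emeasure_space_1)
  also have "\<dots> = ennreal l + (\<Sum>j<n. (\<integral>\<^sup>+ x. ennreal (G j x) \<partial>?M))"
    by (intro arg_cong2[where f="(+)"] refl sum.cong marginal q) auto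
  also have "\<dots> \<le> ennreal l + (\<Sum>j<n. ennreal (?K * \<bar>a j\<bar> powr q * l powr (1 - q)))"
    unfolding G_def by (intro add_left_mono sum_mono coord_int q pq l)
  also have "\<dots> = ennreal (l + (\<Sum>j<n. ?K * \<bar>a j\<bar> powr q * l powr (1 - q)))"
    using q pq l by (simp add: ennreal_plus sum_nonneg sum_ennreal)
  also have "(\<Sum>j<n. ?K * \<bar>a j\<bar> powr q * l powr (1 - q)) = (?K * l powr (1 - q)) * (\<Sum>j<n. \<bar>a j\<bar> powr q)"
    by (simp add: sum_distrib_left sum_distrib_right mult_ac)
  also have "\<dots> = ?K * (l powr (1 - q) * l powr q)" by (simp add: ldef mult_ac)
  also have "l powr (1 - q) * l powr q = l"
    using l by (simp add: powr_add[symmetric])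
  finally show ?thesis by (simp add: algebra_simps)
qed

lemma lower_nn:
  fixes a :: "nat \<Rightarrow> real"
  assumes q: "1 < q" and pq: "q < p" and l: "0 < l" and ldef: "l powr q = (\<Sum>j<n. \<bar>a j\<bar> powr q)"
  shows "ennreal ((1 - exp (- min 1 (q - 1))) * l)
    \<le> (\<integral>\<^sup>+ \<omega>. ennreal ((\<Sum>j<n. \<bar>a j * \<omega> j\<bar> powr p) powr (1 / p)) \<partial>PiM {..<n} (\<lambda>_. density lborel (dens q)))"
proof -
  let ?M = "density lborel (dens q)"
  let ?P = "PiM {..<n} (\<lambda>_. ?M)"
  let ?Y = "\<lambda>\<omega>. (\<Sum>j<n. \<bar>a j * \<omega> j\<bar> powr p) powr (1 / p)"
  let ?c0 = "min 1 (q - 1)"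
  interpret P: prob_space ?P using prob_space_PiM[of "{..<n}" "\<lambda>_. ?M"] prob_M[OF q] by auto
  interpret PP: product_prob_space "\<lambda>_. ?M" "{..<n}"
    by (rule product_prob_spaceI) (rule prob_M[OF q])
  define E where "E = {\<omega> \<in> space ?P. l \<le> ?Y \<omega>}"
  define F where "F = PiE {..<n} (\<lambda>j. {x. \<bar>a j * x\<bar> < l})"
  have Em: "E \<in> sets ?P" unfolding E_def by measurable
  have Fm: "F \<in> sets ?P" unfolding F_def by (intro sets_PiM_I_finite) auto
  have p0: "0 < p" using q pq by simp
  have al: "\<bar>a j\<bar> \<le> l" if "j < n" for j
  proof (rule ccontr)
    assume "\<not> \<bar>a j\<bar> \<le> l"
    then have "l powr q < \<bar>a j\<bar> powr q" using l q by (intro powr_less_mono2) auto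
    also have "\<bar>a j\<bar> powr q \<le> (\<Sum>j<n. \<bar>a j\<bar> powr q)"
      using that by (intro member_le_sum) auto
    finally show False using ldef by simp
  qed
  have sub: "space ?P - F \<subseteq> E"
  proof
    fix \<omega> assume w: "\<omega> \<in> space ?P - F"
    then have "\<omega> \<in> PiE {..<n} (\<lambda>_. UNIV)" by (simp add: space_PiM)
    with w obtain j where j: "j < n" and ge: "l \<le> \<bar>a j * \<omega> j\<bar>" by (auto simp: F_def PiE_iff not_less)
    have "\<bar>a j * \<omega> j\<bar> = (\<bar>a j * \<omega> j\<bar> powr p) powr (1 / p)" using p0 by (simp add: powr_powr)
    also have "\<dots> \<le> ?Y \<omega>"
      using j p0 by (intro powr_mono2 member_le_sum) auto
    finally show "\<omega> \<in> E" using ge w by (simp add: E_def)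
  qed
  have mF: "measure ?P F = (\<Prod>j<n. measure ?M {x. \<bar>a j * x\<bar> < l})"
  proof -
    have "ennreal (measure ?P F) = emeasure ?P F" using Fm by (simp add: P.emeasure_eq_measure)
    also have "\<dots> = (\<Prod>j<n. emeasure ?M {x. \<bar>a j * x\<bar> < l})"
      unfolding F_def by (intro PP.emeasure_PiM) auto
    also have "\<dots> = (\<Prod>j<n. ennreal (measure ?M {x. \<bar>a j * x\<bar> < l}))"
      by (intro prod.cong refl) (simp add: PP.emeasure_eq_measure)
    also have "\<dots> = ennreal (\<Prod>j<n. measure ?M {x. \<bar>a j * x\<bar> < l})"
      by (rule prod_ennreal) simp
    finally show ?thesis by (simp add: prod_nonneg)
  qed
  have "(\<Prod>j<n. measure ?M {x. \<bar>a j * x\<bar> < l}) \<le> (\<Prod>j<n. exp (- (?c0 * (\<bar>a j\<bar> / l) powr q)))"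
  proof (intro prod_mono conjI)
    fix j assume "j \<in> {..<n}"
    then have "j < n" by simp
    have "measure ?M {x. \<bar>a j * x\<bar> < l} \<le> 1 - ?c0 * (\<bar>a j\<bar> / l) powr q"
      by (rule coord_small[OF q l al[OF \<open>j < n\<close>]])
    also have "\<dots> \<le> exp (- (?c0 * (\<bar>a j\<bar> / l) powr q))"
      using exp_ge_add_one_self[of "- (?c0 * (\<bar>a j\<bar> / l) powr q)"] by linarith
    finally show "measure ?M {x. \<bar>a j * x\<bar> < l} \<le> exp (- (?c0 * (\<bar>a j\<bar> / l) powr q))" .
  qed simp
  also have "\<dots> = exp (- (?c0 * (\<Sum>j<n. (\<bar>a j\<bar> / l) powr q)))"
    by (simp add: exp_sum[symmetric] sum_distrib_left sum_negf)
  also have "(\<Sum>j<n. (\<bar>a j\<bar> / l) powr q) = (\<Sum>j<n. \<bar>a j\<bar> powr q) / l powr q"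
    using l by (simp add: powr_divide sum_divide_distrib)
  also have "\<dots> = 1" using ldef l by (metis div_self powr_gt_zero less_irrefl)
  finally have Fle: "measure ?P F \<le> exp (- ?c0)" using mF by simp
  have "measure ?P (space ?P - F) \<le> measure ?P E"
    using sub Em by (intro P.finite_measure_mono) auto
  then have mE: "1 - exp (- ?c0) \<le> measure ?P E"
    using P.prob_compl[OF Fm] Fle by linarith
  have "ennreal ((1 - exp (- ?c0)) * l) = ennreal l * ennreal (1 - exp (- ?c0))"
    using l q by (simp add: ennreal_mult mult.commute)
  also have "\<dots> \<le> ennreal l * emeasure ?P E"
    using mE Em by (intro mult_left_mono) (auto simp: P.emeasure_eq_measure)
  also have "\<dots> = (\<integral>\<^sup>+ \<omega>. ennreal l * indicator E \<omega> \<partial>?P)"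
    using Em by (simp add: nn_integral_cmult_indicator)
  also have "\<dots> \<le> (\<integral>\<^sup>+ \<omega>. ennreal (?Y \<omega>) \<partial>?P)"
    by (intro nn_integral_mono) (auto simp: E_def ennreal_leI split: split_indicator)
  finally show ?thesis .
qed


theorem lemma4p1:
  fixes p q :: real
  assumes "1 < q" and "q < p"
  shows "(\<forall>x. 0 \<le> dens q x) \<and> dens q \<in> borel_measurable borel \<and>
         (\<integral>\<^sup>+ x. ennreal (dens q x) \<partial>lborel) = 1 \<and>
         (\<exists>c C. 0 < c \<and> 0 < C \<and>
            (\<forall>(n::nat) (a::nat \<Rightarrow> real).
               c * lq_norm q n a
                 \<le> (\<integral>\<omega>. (\<Sum>j<n. \<bar>a j * \<omega> j\<bar> powr p) powr (1 / p)
                       \<partial>(PiM {..<n} (\<lambda>_. density lborel (dens q)))) \<and>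
               (\<integral>\<omega>. (\<Sum>j<n. \<bar>a j * \<omega> j\<bar> powr p) powr (1 / p)
                       \<partial>(PiM {..<n} (\<lambda>_. density lborel (dens q))))
                 \<le> C * lq_norm q n a))"
proof -
  note q = assms(1) and pq = assms(2)
  define c where "c = 1 - exp (- min 1 (q - 1))"
  define C where "C = 1 + (q * (q - 1) / (p - q) + q)"
  have c0: "0 < c" unfolding c_def using q by simp
  have C0: "0 < C" unfolding C_def using q pq by (simp add: add_pos_pos)
  have main: "c * lq_norm q n a
                 \<le> (\<integral>\<omega>. (\<Sum>j<n. \<bar>a j * \<omega> j\<bar> powr p) powr (1 / p)
                       \<partial>(PiM {..<n} (\<lambda>_. density lborel (dens q)))) \<and>
               (\<integral>\<omega>. (\<Sum>j<n. \<bar>a j * \<omega> j\<bar> powr p) powr (1 / p)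
                       \<partial>(PiM {..<n} (\<lambda>_. density lborel (dens q))))
                 \<le> C * lq_norm q n a" for n and a :: "nat \<Rightarrow> real"
  proof -
    let ?P = "PiM {..<n} (\<lambda>_. density lborel (dens q))"
    let ?Y = "\<lambda>\<omega>. (\<Sum>j<n. \<bar>a j * \<omega> j\<bar> powr p) powr (1 / p)"
    let ?S = "\<Sum>j<n. \<bar>a j\<bar> powr q"
    let ?l = "lq_norm q n a"
    have S0: "0 \<le> ?S" by (simp add: sum_nonneg)
    show ?thesis
    proof (cases "?S = 0")
      case True
      then have aj: "a j = 0" if "j < n" for j
        using that sum_nonneg_eq_0_iff[of "{..<n}" "\<lambda>j. \<bar>a j\<bar> powr q"] by auto
      have l0: "?l = 0" unfolding lq_norm_def using True by simp
      have "?Y \<omega> = 0" for \<omega> using aj by simp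
      then have "(\<integral>\<omega>. ?Y \<omega> \<partial>?P) = 0" by simp
      then show ?thesis using l0 by simp
    next
      case False
      then have Spos: "0 < ?S" using S0 by simp
      have l: "0 < ?l" unfolding lq_norm_def using Spos by simp
      have ldef: "?l powr q = ?S" unfolding lq_norm_def using Spos q by (simp add: powr_powr)
      have eq: "(\<integral>\<omega>. ?Y \<omega> \<partial>?P) = enn2real (\<integral>\<^sup>+ \<omega>. ennreal (?Y \<omega>) \<partial>?P)"
        by (rule integral_eq_nn_integral) (auto intro: Y_meas)
      have lo: "ennreal (c * ?l) \<le> (\<integral>\<^sup>+ \<omega>. ennreal (?Y \<omega>) \<partial>?P)"
        unfolding c_def by (rule lower_nn[OF q pq l ldef])
      have up: "(\<integral>\<^sup>+ \<omega>. ennreal (?Y \<omega>) \<partial>?P) \<le> ennreal (C * ?l)"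
        unfolding C_def by (rule upper_nn[OF q pq l ldef])
      have fin: "(\<integral>\<^sup>+ \<omega>. ennreal (?Y \<omega>) \<partial>?P) < \<top>"
        using up by (meson ennreal_less_top le_less_trans)
      have "c * ?l = enn2real (ennreal (c * ?l))" using c0 l by simp
      also have "\<dots> \<le> enn2real (\<integral>\<^sup>+ \<omega>. ennreal (?Y \<omega>) \<partial>?P)"
        using lo fin by (intro enn2real_mono)
      finally have 1: "c * ?l \<le> (\<integral>\<omega>. ?Y \<omega> \<partial>?P)" using eq by simp
      have "enn2real (\<integral>\<^sup>+ \<omega>. ennreal (?Y \<omega>) \<partial>?P) \<le> enn2real (ennreal (C * ?l))"
        using up by (intro enn2real_mono) auto
      also have "\<dots> = C * ?l" using C0 l by simp
      finally have 2: "(\<integral>\<omega>. ?Y \<omega> \<partial>?P) \<le> C * ?l" using eq by simp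
      show ?thesis using 1 2 by simp
    qed
  qed
  show ?thesis
    using dens_nonneg[OF q] dens_meas dens_total[OF q] c0 C0 main by blast
qed

end
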